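(* Let $\mathcal{H}$ be a complex Hilbert space, let $A\in\mathcal{B}(\mathcal{H})$ be a nonzero positive operator, and let $\mathbb{A}=\begin{pmatrix}A&O\\O&A\end{pmatrix}$ on $\mathcal{H}\oplus\mathcal{H}$. Let $P,Q,R,S\in\mathcal{B}_A(\mathcal{H})$. Then $$\omega_{\mathbb{A}}\left[\begin{pmatrix}P&Q\\R&S\end{pmatrix}\right]\leq\frac12\Big(\omega_A(P)+\omega_A(S)+\sqrt{(\omega_A(P)-\omega_A(S))^2+(\omega_A(Q+R)+\omega_A(Q-R))^2}\Big),$$ and moreover the right-hand side is at most $\max\{\omega_A(P),\omega_A(S)\}+\frac{\omega_A(Q+R)+\omega_A(Q-R)}{2}$.
   Context: For a positive operator $A$ on $\mathcal{H}$, $\langle x,y\rangle_A:=\langle Ax,y\rangle$ and $\|x\|_A:=\sqrt{\langle x,x\rangle_A}$. $\mathcal{B}_A(\mathcal{H})$ is the set of $T\in\mathcal{B}(\mathcal{H})$ with $\mathcal{R}(T^*A)\subseteq\mathcal{R}(A)$ (operators admitting an $A$-adjoint). $\omega_A(T):=\sup\{|\langle Tx,x\rangle_A|:x\in\mathcal{H},\|x\|_A=1\}$. $\omega_{\mathbb{A}}$ is defined analogously on $\mathcal{H}\oplus\mathcal{H}$ with $\langle (x_1,x_2),(y_1,y_2)\rangle_{\mathbb{A}}=\langle x_1,y_1\rangle_A+\langle x_2,y_2\rangle_A$. *)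

theory Defs
  imports "HOL-Analysis.Analysis"
begin

class complex_inner = real_normed_vector +
  fixes cscale :: "complex \<Rightarrow> 'a \<Rightarrow> 'a"
    and cinner :: "'a \<Rightarrow> 'a \<Rightarrow> complex"
  assumes cscale_add_right: "cscale c (x + y) = cscale c x + cscale c y"
    and cscale_add_left: "cscale (c + d) x = cscale c x + cscale d x"
    and cscale_cscale: "cscale c (cscale d x) = cscale (c * d) x"
    and cscale_one: "cscale 1 x = x"
    and cscale_of_real: "cscale (complex_of_real r) x = scaleR r x"
    and cinner_conj: "cinner x y = cnj (cinner y x)"
    and cinner_add_left: "cinner (x + y) z = cinner x z + cinner y z"
    and cinner_cscale_left: "cinner (cscale c x) y = c * cinner x y"
    and cinner_ge_zero: "0 \<le> Re (cinner x x)"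
    and cinner_eq_zero_iff: "cinner x x = 0 \<longleftrightarrow> x = 0"
    and norm_eq_sqrt_cinner: "norm x = sqrt (Re (cinner x x))"

class chilbert_space = complex_inner + complete_space

definition bounded_clinear_op :: "('a::complex_inner \<Rightarrow> 'a) \<Rightarrow> bool" where
  "bounded_clinear_op T \<longleftrightarrow> bounded_linear T \<and> (\<forall>c x. T (cscale c x) = cscale c (T x))"

definition cadjoint :: "('a::complex_inner \<Rightarrow> 'a) \<Rightarrow> ('a \<Rightarrow> 'a)" where
  "cadjoint T = (THE S. \<forall>x y. cinner (T x) y = cinner x (S y))"

definition positive_op :: "('a::complex_inner \<Rightarrow> 'a) \<Rightarrow> bool" where
  "positive_op A \<longleftrightarrow> bounded_clinear_op A \<and>
     (\<forall>x. Im (cinner (A x) x) = 0 \<and> 0 \<le> Re (cinner (A x) x))"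

definition BA :: "('a::complex_inner \<Rightarrow> 'a) \<Rightarrow> ('a \<Rightarrow> 'a) set" where
  "BA A = {T. bounded_clinear_op T \<and> range (cadjoint T \<circ> A) \<subseteq> range A}"

definition omega_ip :: "('b \<Rightarrow> 'b \<Rightarrow> complex) \<Rightarrow> ('b \<Rightarrow> 'b) \<Rightarrow> real" where
  "omega_ip ip T = Sup {cmod (ip (T x) x) | x. ip x x = 1}"

text \<open>\<open>\<langle>x,y\<rangle>_A = \<langle>Ax,y\<rangle>\<close>; note \<open>\<parallel>x\<parallel>_A = 1\<close> iff \<open>\<langle>x,x\<rangle>_A = 1\<close>.\<close>
definition A_inner :: "('a::complex_inner \<Rightarrow> 'a) \<Rightarrow> 'a \<Rightarrow> 'a \<Rightarrow> complex" where
  "A_inner A x y = cinner (A x) y"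

definition omega_A :: "('a::complex_inner \<Rightarrow> 'a) \<Rightarrow> ('a \<Rightarrow> 'a) \<Rightarrow> real" where
  "omega_A A T = omega_ip (A_inner A) T"

definition AA_inner :: "('a::complex_inner \<Rightarrow> 'a) \<Rightarrow> 'a \<times> 'a \<Rightarrow> 'a \<times> 'a \<Rightarrow> complex" where
  "AA_inner A x y = A_inner A (fst x) (fst y) + A_inner A (snd x) (snd y)"

definition block_op :: "('a::complex_inner \<Rightarrow> 'a) \<Rightarrow> ('a \<Rightarrow> 'a) \<Rightarrow> ('a \<Rightarrow> 'a) \<Rightarrow> ('a \<Rightarrow> 'a)
    \<Rightarrow> 'a \<times> 'a \<Rightarrow> 'a \<times> 'a" where
  "block_op P Q R S x = (P (fst x) + Q (snd x), R (fst x) + S (snd x))"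

definition omega_AA :: "('a::complex_inner \<Rightarrow> 'a) \<Rightarrow> ('a \<times> 'a \<Rightarrow> 'a \<times> 'a) \<Rightarrow> real" where
  "omega_AA A T = omega_ip (AA_inner A) T"

end

theory Submission
  imports Defs
begin
lemma cinner_add_right: "cinner x (y + z) = cinner x y + cinner x (z::'a::complex_inner)"
  by (metis cinner_conj cinner_add_left complex_cnj_add)

lemma cinner_cscale_right: "cinner x (cscale c y) = cnj c * cinner x (y::'a::complex_inner)"
  by (metis cinner_conj cinner_cscale_left complex_cnj_mult complex_cnj_cnj)

lemma cinner_zero_left[simp]: "cinner 0 (y::'a::complex_inner) = 0"
  by (metis add_cancel_right_right add_0 cinner_add_left)

lemma cinner_zero_right[simp]: "cinner y (0::'a::complex_inner) = 0"
  by (metis cinner_conj cinner_zero_left complex_cnj_zero)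

lemma cinner_scaleR_left: "cinner (scaleR r x) (y::'a::complex_inner) = of_real r * cinner x y"
  by (metis cinner_cscale_left cscale_of_real)

lemma cinner_scaleR_right: "cinner x (scaleR r y) = of_real r * cinner x (y::'a::complex_inner)"
  by (metis cinner_cscale_right cscale_of_real complex_cnj_complex_of_real)

lemma cinner_minus_left: "cinner (-x) (y::'a::complex_inner) = - cinner x y"
  using cinner_scaleR_left[of "-1" x y] by simp

lemma cinner_minus_right: "cinner x (-y::'a::complex_inner) = - cinner x y"
  using cinner_scaleR_right[of x "-1" y] by simp

lemma cinner_diff_left: "cinner (x - y) (z::'a::complex_inner) = cinner x z - cinner y z"
  by (metis cinner_add_left cinner_minus_left diff_conv_add_uminus)

lemma cinner_diff_right: "cinner x (y - z::'a::complex_inner) = cinner x y - cinner x z"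
  by (metis cinner_add_right cinner_minus_right diff_conv_add_uminus)

lemma cinner_self_real: "Im (cinner x (x::'a::complex_inner)) = 0"
  by (metis cinner_conj cnj.simps(2) neg_equal_zero)

lemma cinner_self_eq: "cinner x (x::'a::complex_inner) = of_real ((norm x)^2)"
proof -
  have "(norm x)^2 = Re (cinner x x)" using norm_eq_sqrt_cinner[of x] cinner_ge_zero[of x] by simp
  then show ?thesis using cinner_self_real[of x] by (simp add: complex_eq_iff)
qed

lemma cscale_zero_right[simp]: "cscale c (0::'a::complex_inner) = 0"
  by (metis add_cancel_right_right cscale_add_right add_0)

lemma cscale_minus_right: "cscale c (- x::'a::complex_inner) = - cscale c x"
  by (metis add_eq_0_iff2 cscale_add_right cscale_zero_right add.right_inverse)

lemma cscale_diff_right: "cscale c (x - y::'a::complex_inner) = cscale c x - cscale c y"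
  by (metis cscale_add_right cscale_minus_right diff_conv_add_uminus)

lemma semi_cs:
  fixes s :: "'a::complex_inner \<Rightarrow> 'a \<Rightarrow> complex"
  assumes add: "\<And>x y z. s (x+y) z = s x z + s y z"
    and sc: "\<And>c x y. s (cscale c x) y = c * s x y"
    and herm: "\<And>x y. s x y = cnj (s y x)"
    and pos: "\<And>x. 0 \<le> Re (s x x)"
  shows "(cmod (s x y))^2 \<le> Re (s x x) * Re (s y y)"
proof -
  have addr: "s x (y+z) = s x y + s x z" for x y z
    by (metis add herm complex_cnj_add)
  have scr: "s x (cscale c y) = cnj c * s x y" for c x y
    by (metis sc herm complex_cnj_mult complex_cnj_cnj)
  have real: "s x x = of_real (Re (s x x))" for x
    using herm[of x x] by (simp add: complex_eq_iff)
  define a where "a = Re (s x x)"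
  define b where "b = Re (s y y)"
  define \<beta> where "\<beta> = s x y"
  have a0: "a \<ge> 0" and b0: "b \<ge> 0" using pos a_def b_def by auto
  have key: "0 \<le> a + 2 * Re (cnj u * \<beta>) + (cmod u)^2 * b" for u
  proof -
    have "s (x + cscale u y) (x + cscale u y) = s x x + cnj u * \<beta> + u * cnj \<beta> + u * cnj u * s y y"
      unfolding \<beta>_def using herm[of y x] by (simp add: add addr sc scr algebra_simps)
    also have "\<dots> = of_real a + (cnj u * \<beta> + cnj (cnj u * \<beta>)) + of_real ((cmod u)^2 * b)"
    proof -
      have uu: "u * cnj u = of_real ((cmod u)^2)" by (metis complex_norm_square of_real_power)
      have "u * cnj u * s y y = of_real ((cmod u)^2 * b)"
        using real[of y] unfolding b_def uu by (metis of_real_mult)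
      moreover have "u * cnj \<beta> = cnj (cnj u * \<beta>)" by simp
      ultimately show ?thesis using real[of x] unfolding a_def by simp
    qed
    finally have "Re (s (x + cscale u y) (x + cscale u y)) = a + 2 * Re (cnj u * \<beta>) + (cmod u)^2 * b"
      by simp
    then show ?thesis using pos by metis
  qed
  have "(cmod \<beta>)^2 \<le> a * b"
  proof (cases "b > 0")
    case True
    have "0 \<le> a + 2 * Re (cnj (- \<beta> / of_real b) * \<beta>) + (cmod (- \<beta> / of_real b))^2 * b"
      by (rule key)
    also have "cnj (- \<beta> / of_real b) * \<beta> = - of_real ((cmod \<beta>)^2 / b)"
    proof -
      have bb: "cnj \<beta> * \<beta> = of_real ((cmod \<beta>)^2)" by (metis complex_norm_square mult.commute of_real_power)
      show ?thesis by (simp add: bb)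
    qed
    also have "(cmod (- \<beta> / of_real b))^2 = (cmod \<beta>)^2 / b^2"
      using True by (simp add: norm_divide power_divide)
    finally have "0 \<le> a - (cmod \<beta>)^2 / b" using True by (simp add: power2_eq_square)
    then show ?thesis using True by (simp add: field_simps)
  next
    case False
    then have b: "b = 0" using b0 by simp
    show ?thesis
    proof (rule ccontr)
      assume "\<not> ?thesis"
      then have "\<beta> \<noteq> 0" using b by simp
      then have pos\<beta>: "(cmod \<beta>)^2 > 0" by simp
      have "0 \<le> a + 2 * Re (cnj (- of_real ((a+1)/(2*(cmod \<beta>)^2)) * \<beta>) * \<beta>)"
        using key[of "- of_real ((a+1)/(2*(cmod \<beta>)^2)) * \<beta>"] b by simp
      also have "cnj (- of_real ((a+1)/(2*(cmod \<beta>)^2)) * \<beta>) * \<beta> = - of_real ((a+1)/2)"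
      proof -
        have bb: "cnj \<beta> * \<beta> = of_real ((cmod \<beta>)^2)" by (metis complex_norm_square mult.commute of_real_power)
        have "cnj (- of_real ((a+1)/(2*(cmod \<beta>)^2)) * \<beta>) * \<beta> = - of_real ((a+1)/(2*(cmod \<beta>)^2)) * (cnj \<beta> * \<beta>)"
          by simp
        also have "\<dots> = - of_real ((a+1)/(2*(cmod \<beta>)^2) * (cmod \<beta>)^2)" by (simp add: bb)
        also have "(a+1)/(2*(cmod \<beta>)^2) * (cmod \<beta>)^2 = (a+1)/2" using pos\<beta> by simp
        finally show ?thesis .
      qed
      finally show False by simp
    qed
  qed
  then show ?thesis unfolding a_def b_def \<beta>_def .
qed

lemma cinner_cs: "cmod (cinner x y) \<le> norm x * norm (y::'a::complex_inner)"
proof -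
  have "(cmod (cinner x y))^2 \<le> Re (cinner x x) * Re (cinner y y)"
    by (rule semi_cs) (auto simp: cinner_add_left cinner_cscale_left intro: cinner_conj cinner_ge_zero)
  also have "\<dots> = (norm x * norm y)^2" by (simp add: cinner_self_eq power_mult_distrib)
  finally show ?thesis by (simp add: power2_le_iff_abs_le)
qed

lemma norm_sq_cinner: "(norm x)^2 = Re (cinner x (x::'a::complex_inner))"
  by (simp add: cinner_self_eq)

lemma parallelogram: "(norm (x - y))^2 + (norm (x + y))^2 = 2 * (norm x)^2 + 2 * (norm (y::'a::complex_inner))^2"
proof -
  have "cinner (x - y) (x - y) + cinner (x + y) (x + y) = 2 * cinner x x + 2 * cinner y y"
    by (simp add: cinner_diff_left cinner_diff_right cinner_add_left cinner_add_right algebra_simps)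
  then have "Re (cinner (x - y) (x - y)) + Re (cinner (x + y) (x + y)) = 2 * Re (cinner x x) + 2 * Re (cinner y y)"
    by (metis plus_complex.sel(1) Re_complex_of_real mult_2 )
  then show ?thesis by (simp add: norm_sq_cinner)
qed

lemma riesz:
  fixes f :: "'a::chilbert_space \<Rightarrow> complex"
  assumes bl: "bounded_linear f" and cl: "\<And>c x. f (cscale c x) = c * f x"
  shows "\<exists>y. \<forall>x. f x = cinner x y"
proof (cases "\<forall>x. f x = 0")
  case True
  then show ?thesis by (intro exI[of _ 0]) simp
next
  case False
  then obtain u where u: "f u \<noteq> 0" by blast
  define M where "M = {x. f x = 1}"
  have u1: "cscale (1 / f u) u \<in> M" using u cl by (simp add: M_def)
  define d where "d = Inf (norm ` M)"
  have bdd: "bdd_below (norm ` M)" by (rule bdd_belowI[of _ 0]) auto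
  have dle: "d \<le> norm x" if "x \<in> M" for x
    unfolding d_def using bdd that by (simp add: cInf_lower)
  have d0: "0 \<le> d" using dle u1 unfolding d_def
    by (metis (no_types, lifting) bdd cInf_greatest empty_iff image_iff norm_ge_zero)
  have ex: "\<exists>x\<in>M. norm x < d + inverse (real (Suc n))" for n
  proof -
    have "Inf (norm ` M) < d + inverse (real (Suc n))" unfolding d_def by simp
    then show ?thesis using bdd u1 by (subst (asm) cInf_less_iff) auto
  qed
  then obtain xs where xsM: "\<And>n. xs n \<in> M" and xsn: "\<And>n. norm (xs n) < d + inverse (real (Suc n))"
    by metis
  have fl: "f (x - y) = f x - f y" "f (x + y) = f x + f y" "f (scaleR r x) = of_real r * f x" for x y r
    using bl by (simp_all add: linear_simps scaleR_conv_of_real)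
  have par: "(norm (x - y))^2 \<le> 2 * (norm x)^2 + 2 * (norm y)^2 - 4 * d^2" if "x \<in> M" "y \<in> M" for x y
  proof -
    have "scaleR (1/2) (x + y) \<in> M" using that by (simp add: M_def fl)
    then have "d \<le> norm (scaleR (1/2) (x + y))" by (rule dle)
    then have "2 * d \<le> norm (x + y)" by simp
    then have "(2 * d)^2 \<le> (norm (x + y))^2" by (rule power_mono) (use d0 in auto)
    then show ?thesis using parallelogram[of x y] by (simp add: power_mult_distrib)
  qed
  have cau: "Cauchy xs"
  proof (rule metric_CauchyI)
    fix e :: real assume e: "e > 0"
    have "e^2 / (8 * d + 4) > 0" using e d0 by simp
    then obtain N where N: "inverse (real (Suc N)) < e^2 / (8 * d + 4)" using reals_Archimedean by blast
    show "\<exists>N. \<forall>m\<ge>N. \<forall>n\<ge>N. dist (xs m) (xs n) < e"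
    proof (intro exI allI impI)
      fix m n assume mn: "N \<le> m" "N \<le> n"
      define a where "a = inverse (real (Suc m))"
      define b where "b = inverse (real (Suc n))"
      define c where "c = inverse (real (Suc N))"
      have a: "0 < a" "a \<le> c" "a \<le> 1" using mn unfolding a_def c_def by (auto simp: field_simps)
      have b: "0 < b" "b \<le> c" "b \<le> 1" using mn unfolding b_def c_def by (auto simp: field_simps)
      have "(norm (xs m))^2 \<le> (d + a)^2"
        using xsn[of m] unfolding a_def by (intro power_mono) auto
      moreover have "(norm (xs n))^2 \<le> (d + b)^2"
        using xsn[of n] unfolding b_def by (intro power_mono) auto
      ultimately have "(norm (xs m - xs n))^2 \<le> 2 * (d+a)^2 + 2*(d+b)^2 - 4 * d^2"
        using par[OF xsM xsM, of m n] by linarith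
      also have "\<dots> = 4*d*a + 2*a*a + 4*d*b + 2*b*b" by (simp add: power2_eq_square algebra_simps)
      also have "\<dots> \<le> 4*d*c + 2*c + 4*d*c + 2*c"
        using a b d0 by (intro add_mono mult_left_mono mult_mono) auto
      also have "\<dots> = (8*d+4) * c" by (simp add: algebra_simps)
      also have "\<dots> < e^2" using N d0 unfolding c_def by (simp add: field_simps)
      finally have "(norm (xs m - xs n))^2 < e^2" .
      then show "dist (xs m) (xs n) < e" using e by (simp add: dist_norm power_less_imp_less_base)
    qed
  qed
  then obtain y0 where lim: "xs \<longlonglongrightarrow> y0" using Cauchy_convergent_iff convergent_def by blast
  have "(\<lambda>n. f (xs n)) \<longlonglongrightarrow> f y0" using bl lim by (rule bounded_linear.tendsto)
  moreover have "(\<lambda>n. f (xs n)) = (\<lambda>n. 1)" using xsM by (simp add: M_def)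
  ultimately have fy0: "f y0 = 1" using LIMSEQ_unique tendsto_const by metis
  have "norm y0 \<le> d"
  proof (rule LIMSEQ_le)
    show "(\<lambda>n. norm (xs n)) \<longlonglongrightarrow> norm y0" using lim by (rule tendsto_norm)
    show "(\<lambda>n. d + inverse (real (Suc n))) \<longlonglongrightarrow> d"
      using tendsto_add[OF tendsto_const LIMSEQ_inverse_real_of_nat] by simp
    show "\<exists>N. \<forall>n\<ge>N. norm (xs n) \<le> d + inverse (real (Suc n))" using xsn less_imp_le by blast
  qed
  then have minimal: "norm y0 \<le> norm x" if "x \<in> M" for x using dle[OF that] by simp
  have orth: "cinner k y0 = 0" if k: "f k = 0" for k
  proof (rule ccontr)
    define \<beta> where "\<beta> = cinner k y0"
    assume "cinner k y0 \<noteq> 0"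
    then have bpos: "(cmod \<beta>)^2 > 0" unfolding \<beta>_def by simp
    define v where "v = cscale (cnj \<beta>) k"
    have fv: "f v = 0" using k cl unfolding v_def by simp
    have bb: "cnj \<beta> * \<beta> = of_real ((cmod \<beta>)^2)" by (metis complex_norm_square mult.commute of_real_power)
    have vy: "cinner v y0 = of_real ((cmod \<beta>)^2)" unfolding v_def
      by (simp add: cinner_cscale_left \<beta>_def[symmetric] bb)
    have yv: "cinner y0 v = of_real ((cmod \<beta>)^2)" using vy cinner_conj[of y0 v] by simp
    define \<epsilon> where "\<epsilon> = (cmod \<beta>)^2 / ((norm v)^2 + 1)"
    have ep: "\<epsilon> > 0" unfolding \<epsilon>_def by (rule divide_pos_pos[OF bpos]) (metis add_nonneg_pos zero_le_power2 zero_less_one)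
    have "y0 - scaleR \<epsilon> v \<in> M" using fy0 fv by (simp add: M_def fl)
    then have "(norm y0)^2 \<le> (norm (y0 - scaleR \<epsilon> v))^2" using minimal by (simp add: power_mono)
    also have "(norm (y0 - scaleR \<epsilon> v))^2 = (norm y0)^2 - 2 * \<epsilon> * (cmod \<beta>)^2 + \<epsilon>^2 * (norm v)^2"
    proof -
      have "cinner (y0 - scaleR \<epsilon> v) (y0 - scaleR \<epsilon> v) =
            cinner y0 y0 - of_real \<epsilon> * cinner y0 v - of_real \<epsilon> * cinner v y0 + of_real \<epsilon> * of_real \<epsilon> * cinner v v"
        by (simp add: cinner_diff_left cinner_diff_right cinner_scaleR_left cinner_scaleR_right algebra_simps)
      also have "\<dots> = of_real ((norm y0)^2 - 2 * \<epsilon> * (cmod \<beta>)^2 + \<epsilon>^2 * (norm v)^2)"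
        by (simp add: vy yv cinner_self_eq power2_eq_square algebra_simps)
      finally show ?thesis by (simp add: norm_sq_cinner)
    qed
    finally have "2 * \<epsilon> * (cmod \<beta>)^2 \<le> \<epsilon> * (\<epsilon> * (norm v)^2)" by (simp add: power2_eq_square algebra_simps)
    then have "2 * (cmod \<beta>)^2 \<le> \<epsilon> * (norm v)^2" using ep by (simp add: mult.assoc)
    also have "\<epsilon> * (norm v)^2 < (cmod \<beta>)^2"
    proof -
      have q: "(norm v)^2 / ((norm v)^2+1) < 1"
        by (metis divide_less_eq_1_pos less_add_one add_nonneg_pos zero_le_power2 zero_less_one)
      have "\<epsilon> * (norm v)^2 = (cmod \<beta>)^2 * ((norm v)^2 / ((norm v)^2+1))" by (simp add: \<epsilon>_def)
      also have "\<dots> < (cmod \<beta>)^2 * 1" by (rule mult_strict_left_mono[OF q bpos])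
      finally show ?thesis by simp
    qed
    finally show False using bpos by simp
  qed
  define n0 where "n0 = cinner y0 y0"
  have "f 0 = 0" using fl(1)[of 0 0] by simp
  then have "y0 \<noteq> 0" using fy0 by auto
  then have n0: "n0 \<noteq> 0" unfolding n0_def using cinner_eq_zero_iff by blast
  show ?thesis
  proof (intro exI allI)
    fix x
    have "f (x - cscale (f x) y0) = 0" using fy0 by (simp add: fl cl)
    then have "cinner (x - cscale (f x) y0) y0 = 0" by (rule orth)
    then have "cinner x y0 = f x * n0" by (simp add: cinner_diff_left cinner_cscale_left n0_def)
    then show "f x = cinner x (cscale (cnj (1 / n0)) y0)"
      using n0 by (simp add: cinner_cscale_right)
  qed
qed

lemma adjoint_exists:
  fixes T :: "'a::chilbert_space \<Rightarrow> 'a"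
  assumes "bounded_clinear_op T"
  shows "\<forall>x y. cinner (T x) y = cinner x (cadjoint T y)"
proof -
  have bl: "bounded_linear T" and cl: "\<And>c x. T (cscale c x) = cscale c (T x)"
    using assms by (auto simp: bounded_clinear_op_def)
  have "\<exists>z. \<forall>x. cinner (T x) y = cinner x z" for y
  proof (rule riesz)
    have "bounded_linear (\<lambda>x. cinner x y)"
    proof (rule bounded_linear_intro[where K = "norm y"])
      show "cinner (x + z) y = cinner x y + cinner z y" for x z by (rule cinner_add_left)
      show "cinner (scaleR r x) y = scaleR r (cinner x y)" for r x by (simp add: cinner_scaleR_left scaleR_conv_of_real)
      show "norm (cinner x y) \<le> norm x * norm y" for x by (rule cinner_cs)
    qed
    then show "bounded_linear (\<lambda>x. cinner (T x) y)"
      using bl by (rule bounded_linear_compose)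
    show "cinner (T (cscale c x)) y = c * cinner (T x) y" for c x by (simp add: cl cinner_cscale_left)
  qed
  then have "\<forall>y. \<exists>z. \<forall>x. cinner (T x) y = cinner x z" by blast
  then have "\<exists>S. \<forall>y. \<forall>x. cinner (T x) y = cinner x (S y)" by (rule choice)
  then obtain S where S0: "\<forall>y. \<forall>x. cinner (T x) y = cinner x (S y)" by blast
  have S: "\<And>x y. cinner (T x) y = cinner x (S y)" using S0 by blast
  have uniq: "S' = S" if S': "\<forall>x y. cinner (T x) y = cinner x (S' y)" for S'
  proof (rule ext)
    fix y
    have h: "cinner x (S' y) = cinner x (S y)" for x
    proof -
      have a: "cinner (T x) y = cinner x (S' y)" using S' by blast
      have b: "cinner (T x) y = cinner x (S y)" by (rule S)
      show ?thesis using a b by simp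
    qed
    have "cinner x (S' y - S y) = 0" for x using h[of x] by (simp add: cinner_diff_right)
    then have "cinner (S' y - S y) (S' y - S y) = 0" by blast
    then show "S' y = S y" using cinner_eq_zero_iff[of "S' y - S y"] by simp
  qed
  have S2: "\<forall>x y. cinner (T x) y = cinner x (S y)" using S by blast
  have "cadjoint T = S" unfolding cadjoint_def
    using S2 uniq by (rule the_equality)
  then show ?thesis using S by simp
qed

lemma clin_facts:
  assumes "bounded_clinear_op (A::'a::complex_inner \<Rightarrow> 'a)"
  shows "A (x + y) = A x + A y" "A (x - y) = A x - A y" "A (cscale c x) = cscale c (A x)"
    "A (scaleR r x) = scaleR r (A x)" "A 0 = 0" "A (- x) = - A x" "bounded_linear A"
  using assms by (auto simp: bounded_clinear_op_def linear_simps)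

lemma pos_real:
  assumes "positive_op A"
  shows "cinner (A x) x = of_real (Re (cinner (A x) x))"
  using assms by (simp add: positive_op_def complex_eq_iff)

lemma pos_selfadj:
  fixes A :: "'a::complex_inner \<Rightarrow> 'a"
  assumes pA: "positive_op A"
  shows "cinner (A x) y = cinner x (A y)"
proof -
  have cl: "bounded_clinear_op A" using pA by (simp add: positive_op_def)
  have im: "Im (cinner (A v) v) = 0" for v using pA by (simp add: positive_op_def)
  define a where "a = cinner (A x) y"
  define b where "b = cinner (A y) x"
  have "cinner (A (x + y)) (x + y) = cinner (A x) x + cinner (A y) y + a + b"
    by (simp add: clin_facts[OF cl] cinner_add_left cinner_add_right a_def b_def)
  then have 1: "Im (a + b) = 0" using im[of "x+y"] im[of x] im[of y] by simp
  have "cinner (A (x + cscale \<i> y)) (x + cscale \<i> y) = cinner (A x) x + cinner (A y) y - \<i> * a + \<i> * b"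
  proof -
    have "cinner (A (cscale \<i> y)) (cscale \<i> y) = cinner (A y) y"
      by (simp add: clin_facts[OF cl] cinner_cscale_left cinner_cscale_right)
    then show ?thesis
      by (simp add: clin_facts[OF cl] cinner_add_left cinner_add_right cinner_cscale_left
          cinner_cscale_right a_def b_def algebra_simps)
  qed
  then have 2: "Re (b - a) = 0" using im[of "x + cscale \<i> y"] im[of x] im[of y] by simp
  have "b = cnj a" using 1 2 by (simp add: complex_eq_iff)
  then show ?thesis unfolding a_def b_def by (metis cinner_conj complex_cnj_cnj)
qed

lemma pos_cs:
  fixes A :: "'a::complex_inner \<Rightarrow> 'a"
  assumes pA: "positive_op A"
  shows "(cmod (cinner (A x) y))^2 \<le> Re (cinner (A x) x) * Re (cinner (A y) y)"
proof (rule semi_cs)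
  have cl: "bounded_clinear_op A" using pA by (simp add: positive_op_def)
  show "cinner (A (x + y)) z = cinner (A x) z + cinner (A y) z" for x y z
    by (simp add: clin_facts[OF cl] cinner_add_left)
  show "cinner (A (cscale c x)) y = c * cinner (A x) y" for c x y
    by (simp add: clin_facts[OF cl] cinner_cscale_left)
  show "cinner (A x) y = cnj (cinner (A y) x)" for x y
    using pos_selfadj[OF pA] by (metis cinner_conj)
  show "0 \<le> Re (cinner (A x) x)" for x using pA by (simp add: positive_op_def)
qed

lemma pos_cs':
  fixes A :: "'a::complex_inner \<Rightarrow> 'a"
  assumes pA: "positive_op A"
  shows "cmod (cinner (A x) y) \<le> sqrt (Re (cinner (A x) x)) * sqrt (Re (cinner (A y) y))"
  using pos_cs[OF pA, of x y] by (metis real_sqrt_mult real_le_rsqrt norm_ge_zero)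

lemma bl_cinner_right: "bounded_linear (\<lambda>y. cinner v (y::'a::complex_inner))"
proof (rule bounded_linear_intro[where K = "norm v"])
  show "cinner v (x + z) = cinner v x + cinner v z" for x z by (rule cinner_add_right)
  show "cinner v (scaleR r x) = scaleR r (cinner v x)" for r x by (simp add: cinner_scaleR_right scaleR_conv_of_real)
  show "norm (cinner v x) \<le> norm x * norm v" for x using cinner_cs[of v x] by (simp add: mult.commute)
qed

lemma uniform_bound:
  fixes \<phi> :: "'i \<Rightarrow> 'a::{real_normed_vector, complete_space} \<Rightarrow> real"
  assumes cont: "\<And>i. continuous_on UNIV (\<phi> i)"
    and tri: "\<And>i x y. \<phi> i (x + y) \<le> \<phi> i x + \<phi> i y"
    and hom: "\<And>i r x. \<phi> i (scaleR r x) = \<bar>r\<bar> * \<phi> i x"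
    and pw: "\<And>x. \<exists>B. \<forall>i\<in>I. \<phi> i x \<le> B"
  shows "\<exists>C. \<forall>i\<in>I. \<forall>x. \<phi> i x \<le> C * norm x"
proof -
  define F where "F n = {x. \<forall>i\<in>I. \<phi> i x \<le> real n}" for n :: nat
  have clF: "closed (F n)" for n
  proof -
    have "F n = (\<Inter>i\<in>I. {x. \<phi> i x \<le> real n})" by (auto simp: F_def)
    moreover have "closed {x. \<phi> i x \<le> real n}" for i
      using cont[of i] by (intro closed_Collect_le) (auto intro: continuous_on_const)
    ultimately show ?thesis by auto
  qed
  have cover: "\<Union>(range F) = UNIV"
  proof (safe)
    fix x
    obtain B where "\<forall>i\<in>I. \<phi> i x \<le> B" using pw by blast
    moreover obtain n where "B \<le> real n" using real_arch_simple by blast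
    ultimately have "x \<in> F n" by (force simp: F_def)
    then show "x \<in> \<Union>(range F)" by blast
  qed auto
  have "\<exists>n. interior (F n) \<noteq> {}"
  proof (rule ccontr)
    assume "\<not> ?thesis"
    then have noint: "interior (F n) = {}" for n by blast
    have "euclidean interior_of \<Union>(range F) = {}"
    proof (rule Baire_category_alt)
      show "completely_metrizable_space (euclidean::'a topology) \<or> locally_compact_space (euclidean::'a topology) \<and> regular_space (euclidean::'a topology)"
        using completely_metrizable_space_euclidean by blast
      show "countable (range F)" by simp
      fix T assume "T \<in> range F"
      then obtain n where T: "T = F n" by blast
      show "closedin euclidean T \<and> euclidean interior_of T = {}"
        unfolding T using clF[of n] noint[of n] closed_closedin by auto
    qed
    then show False using cover by simp
  qed
  then obtain n x0 where "x0 \<in> interior (F n)" by blast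
  then obtain r where r: "r > 0" "ball x0 r \<subseteq> F n" using mem_interior by blast
  have phi0: "\<phi> i 0 = 0" for i using hom[of i 0 0] by simp
  have small: "\<phi> i u \<le> 2 * real n" if "i \<in> I" "norm u < r" for i u
  proof -
    have "x0 + u \<in> F n" "x0 \<in> F n" using r that by (auto simp: dist_norm)
    then have "\<phi> i (x0 + u) \<le> n" "\<phi> i x0 \<le> n" using that by (auto simp: F_def)
    moreover have "\<phi> i (- x0) = \<phi> i x0" using hom[of i "-1" x0] by simp
    moreover have "\<phi> i u \<le> \<phi> i (x0 + u) + \<phi> i (- x0)" using tri[of i "x0 + u" "- x0"] by simp
    ultimately show ?thesis by linarith
  qed
  show ?thesis
  proof (intro exI ballI allI)
    fix i x assume i: "i \<in> I"
    show "\<phi> i x \<le> (4 * real n / r) * norm x"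
    proof (cases "x = 0")
      case True then show ?thesis by (simp add: phi0)
    next
      case False
      then have nx: "norm x > 0" by simp
      have "norm (scaleR (r / (2 * norm x)) x) < r" using nx r by simp
      then have "\<phi> i (scaleR (r / (2 * norm x)) x) \<le> 2 * real n" by (rule small[OF i])
      then have "(r / (2 * norm x)) * \<phi> i x \<le> 2 * real n" using hom r nx by simp
      then show ?thesis using nx r by (simp add: field_simps)
    qed
  qed
qed

lemma douglas:
  fixes A T T' :: "'a::chilbert_space \<Rightarrow> 'a"
  assumes pA: "positive_op A" and cT: "bounded_clinear_op T"
    and adj: "\<And>x y. cinner (T x) y = cinner x (T' y)"
    and w: "\<And>y. T' (A y) = A (w y)"
  shows "\<exists>c\<ge>0. \<forall>z. norm (A (T z)) \<le> c * norm (A z)"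
proof -
  have cA: "bounded_clinear_op A" using pA by (simp add: positive_op_def)
  have key: "cinner (A (T z)) y = cinner (A z) (w y)" for z y
  proof -
    have "cinner (A (T z)) y = cinner (T z) (A y)" by (rule pos_selfadj[OF pA])
    also have "\<dots> = cinner z (T' (A y))" by (rule adj)
    also have "\<dots> = cinner z (A (w y))" by (simp add: w)
    also have "\<dots> = cinner (A z) (w y)" by (rule pos_selfadj[OF pA, symmetric])
    finally show ?thesis .
  qed
  define \<phi> where "\<phi> z y = cmod (cinner (A (T z)) y)" for z y
  have "\<exists>C. \<forall>z\<in>{z. norm (A z) \<le> 1}. \<forall>y. \<phi> z y \<le> C * norm y"
  proof (rule uniform_bound)
    show "continuous_on UNIV (\<phi> z)" for z
      unfolding \<phi>_def by (intro continuous_on_norm linear_continuous_on bl_cinner_right)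
    show "\<phi> z (x + y) \<le> \<phi> z x + \<phi> z y" for z x y
      unfolding \<phi>_def by (simp add: cinner_add_right norm_triangle_ineq)
    show "\<phi> z (scaleR r x) = \<bar>r\<bar> * \<phi> z x" for z r x
      unfolding \<phi>_def by (simp add: cinner_scaleR_right norm_mult)
    show "\<exists>B. \<forall>z\<in>{z. norm (A z) \<le> 1}. \<phi> z y \<le> B" for y
    proof (intro exI ballI)
      fix z assume "z \<in> {z. norm (A z) \<le> 1}"
      then have "norm (A z) \<le> 1" by simp
      have "\<phi> z y = cmod (cinner (A z) (w y))" by (simp add: \<phi>_def key)
      also have "\<dots> \<le> norm (A z) * norm (w y)" by (rule cinner_cs)
      also have "\<dots> \<le> 1 * norm (w y)" by (rule mult_right_mono) (use \<open>norm (A z) \<le> 1\<close> in auto)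
      finally show "\<phi> z y \<le> norm (w y)" by simp
    qed
  qed
  then obtain C where C: "\<And>z y. norm (A z) \<le> 1 \<Longrightarrow> \<phi> z y \<le> C * norm y" by blast
  define c where "c = max C 0"
  have b1: "norm (A (T z)) \<le> c" if "norm (A z) \<le> 1" for z
  proof (cases "A (T z) = 0")
    case True then show ?thesis by (simp add: c_def)
  next
    case False
    have "(norm (A (T z)))^2 = \<phi> z (A (T z))" by (simp add: \<phi>_def cinner_self_eq norm_power del: of_real_power)
    also have "\<dots> \<le> C * norm (A (T z))" by (rule C[OF that])
    also have "\<dots> \<le> c * norm (A (T z))" by (rule mult_right_mono) (auto simp: c_def)
    finally show ?thesis using False by (simp add: power2_eq_square)
  qed
  show ?thesis
  proof (intro exI conjI allI)
    show "0 \<le> c" by (simp add: c_def)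
    fix z
    show "norm (A (T z)) \<le> c * norm (A z)"
    proof (cases "A z = 0")
      case True
      have "cinner (A (T z)) (A (T z)) = 0" by (simp add: key True)
      then have "A (T z) = 0" using cinner_eq_zero_iff by blast
      then show ?thesis using True by simp
    next
      case False
      define s where "s = 1 / norm (A z)"
      have s: "s > 0" using False by (simp add: s_def)
      have "A (scaleR s z) = scaleR s (A z)" by (simp add: clin_facts[OF cA])
      then have "norm (A (scaleR s z)) \<le> 1" using False by (simp add: s_def)
      then have "norm (A (T (scaleR s z))) \<le> c" by (rule b1)
      moreover have "A (T (scaleR s z)) = scaleR s (A (T z))" by (simp add: clin_facts[OF cA] clin_facts[OF cT])
      ultimately have "s * norm (A (T z)) \<le> c" using s by simp
      then show ?thesis using False by (simp add: s_def field_simps)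
    qed
  qed
qed


lemma krein:
  fixes A T T' :: "'a::chilbert_space \<Rightarrow> 'a"
  assumes pA: "positive_op A" and cT: "bounded_clinear_op T"
    and adj: "\<And>x y. cinner (T x) y = cinner x (T' y)"
    and rng: "\<And>y. \<exists>w. T' (A y) = A w"
  shows "\<exists>M. \<forall>x. cmod (cinner (A (T x)) x) \<le> M * Re (cinner (A x) x)"
proof -
  have cA: "bounded_clinear_op A" using pA by (simp add: positive_op_def)
  have "\<forall>y. \<exists>w. T' (A y) = A w" using rng by blast
  then obtain w where w: "\<And>y. T' (A y) = A (w y)" by metis
  obtain c where c0: "c \<ge> 0" and c: "\<And>z. norm (A (T z)) \<le> c * norm (A z)"
    using douglas[OF pA cT adj w] by blast
  have "bounded_linear T" using cT by (simp add: bounded_clinear_op_def)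
  then obtain K where K0: "K > 0" and K: "\<And>x. norm (T x) \<le> norm x * K"
    using bounded_linear.pos_bounded by blast
  have T'b: "norm (T' v) \<le> K * norm v" for v
  proof (cases "T' v = 0")
    case True then show ?thesis using K0 by simp
  next
    case False
    have "(norm (T' v))^2 = cmod (cinner (T (T' v)) v)"
      by (simp add: adj cinner_self_eq norm_power del: of_real_power)
    also have "\<dots> \<le> norm (T (T' v)) * norm v" by (rule cinner_cs)
    also have "\<dots> \<le> (norm (T' v) * K) * norm v" by (rule mult_right_mono[OF K]) simp
    finally have "norm (T' v) * norm (T' v) \<le> norm (T' v) * (K * norm v)"
      by (simp add: power2_eq_square mult.assoc)
    then show ?thesis using False by simp
  qed
  define L where "L = K * c"
  have L0: "L \<ge> 0" using K0 c0 by (simp add: L_def)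
  have main: "cmod (cinner (A (T x)) x) \<le> sqrt L * Re (cinner (A x) x)" for x
  proof -
    define xs where "xs = rec_nat x (\<lambda>_ v. w (T v))"
    have xs0: "xs 0 = x" and xsS: "xs (Suc n) = w (T (xs n))" for n by (simp_all add: xs_def)
    have Axs: "A (xs (Suc n)) = T' (A (T (xs n)))" for n by (simp add: xsS w)
    have nA: "norm (A (xs n)) \<le> L^n * norm (A x)" for n
    proof (induction n)
      case 0 then show ?case by (simp add: xs0)
    next
      case (Suc n)
      have "norm (A (xs (Suc n))) \<le> K * norm (A (T (xs n)))" by (simp add: Axs T'b)
      also have "\<dots> \<le> K * (c * norm (A (xs n)))" by (rule mult_left_mono[OF c]) (use K0 in simp)
      also have "\<dots> = L * norm (A (xs n))" by (simp add: L_def)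
      also have "\<dots> \<le> L * (L^n * norm (A x))" by (rule mult_left_mono[OF Suc.IH L0])
      finally show ?case by simp
    qed
    define m where "m j k = cinner (A (xs j)) (xs k)" for j k
    have sym: "m (Suc j) k = m j (Suc k)" for j k
    proof -
      have "m (Suc j) k = cinner (T' (A (T (xs j)))) (xs k)" by (simp add: m_def Axs)
      also have "\<dots> = cnj (cinner (xs k) (T' (A (T (xs j)))))" by (rule cinner_conj)
      also have "\<dots> = cnj (cinner (T (xs k)) (A (T (xs j))))" by (simp add: adj)
      also have "\<dots> = cinner (A (T (xs j))) (T (xs k))" by (metis cinner_conj)
      finally have 1: "m (Suc j) k = cinner (A (T (xs j))) (T (xs k))" .
      have "m j (Suc k) = cinner (xs j) (A (xs (Suc k)))" by (simp add: m_def pos_selfadj[OF pA])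
      also have "\<dots> = cinner (xs j) (T' (A (T (xs k))))" by (simp add: Axs)
      also have "\<dots> = cinner (T (xs j)) (A (T (xs k)))" by (simp add: adj)
      also have "\<dots> = cinner (A (T (xs j))) (T (xs k))" by (simp add: pos_selfadj[OF pA])
      finally show ?thesis using 1 by simp
    qed
    have shift: "m j k = m (j + k) 0" for j k
    proof (induction k arbitrary: j)
      case 0 then show ?case by simp
    next
      case (Suc k)
      have "m j (Suc k) = m (Suc j) k" by (simp add: sym)
      also have "\<dots> = m (Suc j + k) 0" by (rule Suc.IH)
      finally show ?case by simp
    qed
    define Q where "Q n = Re (m n n)" for n
    have Q0: "Q n \<ge> 0" for n using pA by (simp add: Q_def m_def positive_op_def)
    have Qup: "Q n \<le> (L^2)^n * (norm (A x) * norm x)" for n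
    proof -
      have "Q n = Re (m (n + n) 0)" by (simp add: Q_def shift[of n n])
      also have "\<dots> \<le> cmod (m (n + n) 0)" by (rule complex_Re_le_cmod)
      also have "\<dots> \<le> norm (A (xs (n + n))) * norm x" unfolding m_def xs0 by (rule cinner_cs)
      also have "\<dots> \<le> (L^(n+n) * norm (A x)) * norm x" by (rule mult_right_mono[OF nA]) simp
      also have "L^(n+n) = (L^2)^n" by (simp add: power_add[symmetric] power_mult[symmetric] mult_2)
      finally show ?thesis by (simp add: mult.assoc)
    qed
    have logc: "(Q (Suc n))^2 \<le> Q n * Q (Suc (Suc n))" for n
    proof -
      have "m (Suc n) (Suc n) = m (Suc (Suc n)) n" by (simp add: shift[of "Suc n" "Suc n"] shift[of "Suc (Suc n)" n])
      then have "Q (Suc n) \<le> cmod (m (Suc (Suc n)) n)" by (simp add: Q_def complex_Re_le_cmod)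
      then have "(Q (Suc n))^2 \<le> (cmod (m (Suc (Suc n)) n))^2" using Q0 by (intro power_mono) auto
      also have "\<dots> \<le> Q (Suc (Suc n)) * Q n" unfolding m_def Q_def by (rule pos_cs[OF pA])
      finally show ?thesis by (simp add: mult.commute)
    qed
    have ratio: "Q n * Q 1 \<le> Q (Suc n) * Q 0" for n
    proof (induction n)
      case 0 then show ?case by (simp add: mult.commute)
    next
      case (Suc n)
      show ?case
      proof (cases "Q n = 0")
        case True
        then have "(Q (Suc n))^2 \<le> 0" using logc[of n] by simp
        then have "Q (Suc n) = 0" by simp
        then show ?thesis using Q0 by simp
      next
        case False
        then have pos: "Q n > 0" using Q0[of n] by simp
        have "Q n * (Q (Suc n) * Q 1) = Q (Suc n) * (Q n * Q 1)" by (simp add: algebra_simps)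
        also have "\<dots> \<le> Q (Suc n) * (Q (Suc n) * Q 0)" by (rule mult_left_mono[OF Suc.IH Q0])
        also have "\<dots> = (Q (Suc n))^2 * Q 0" by (simp add: power2_eq_square algebra_simps)
        also have "\<dots> \<le> (Q n * Q (Suc (Suc n))) * Q 0" by (rule mult_right_mono[OF logc Q0])
        also have "\<dots> = Q n * (Q (Suc (Suc n)) * Q 0)" by (simp add: algebra_simps)
        finally show ?thesis using pos by (simp add: mult_le_cancel_left_pos)
      qed
    qed
    have Q1: "Q 1 \<le> L^2 * Q 0"
    proof (cases "Q 0 = 0")
      case True
      then have "(Q 1)^2 \<le> 0" using logc[of 0] by simp
      then show ?thesis using True by simp
    next
      case False
      then have q0: "Q 0 > 0" using Q0[of 0] by simp
      show ?thesis
      proof (rule ccontr)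
        assume "\<not> ?thesis"
        then have gt: "Q 1 > L^2 * Q 0" by simp
        define \<rho> where "\<rho> = Q 1 / Q 0"
        have \<rho>: "\<rho> > L^2" using gt q0 by (simp add: \<rho>_def field_simps)
        have low: "Q 0 * \<rho>^n \<le> Q n" for n
        proof (induction n)
          case 0 then show ?case by simp
        next
          case (Suc n)
          have "Q n * \<rho> \<le> Q (Suc n)" using ratio[of n] q0 by (simp add: \<rho>_def field_simps)
          moreover have "Q 0 * \<rho>^n * \<rho> \<le> Q n * \<rho>"
            by (rule mult_right_mono[OF Suc.IH]) (use \<rho> zero_le_power2[of L] in linarith)
          moreover have "Q 0 * \<rho>^Suc n = Q 0 * \<rho>^n * \<rho>" by (simp add: power_Suc2 mult.assoc)
          ultimately show ?case by linarith
        qed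
        show False
        proof (cases "L = 0")
          case True
          then have "Q 1 \<le> 0" using Qup[of 1] by simp
          then show False using gt True by simp
        next
          case False
          then have L2: "L^2 > 0" by simp
          have "1 < \<rho> / L^2" using \<rho> L2 by simp
          then obtain n where n: "(norm (A x) * norm x) / Q 0 < (\<rho> / L^2)^n" using real_arch_pow by blast
          have "Q 0 * \<rho>^n \<le> (L^2)^n * (norm (A x) * norm x)" using low[of n] Qup[of n] by simp
          then have le: "Q 0 * \<rho>^n \<le> (L^2)^n * (norm (A x) * norm x)" .
          have Lp: "(L^2)^n > 0" using L2 by simp
          have "(\<rho> / L^2)^n = (Q 0 * \<rho>^n) / (Q 0 * (L^2)^n)" using q0 by (simp add: power_divide)
          also have "\<dots> \<le> ((L^2)^n * (norm (A x) * norm x)) / (Q 0 * (L^2)^n)"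
            by (rule divide_right_mono[OF le]) (use q0 Lp in simp)
          also have "\<dots> = (norm (A x) * norm x) / Q 0" using Lp q0 False by simp
          finally have "(\<rho> / L^2)^n \<le> (norm (A x) * norm x) / Q 0" .
          then show False using n by simp
        qed
      qed
    qed
    have eq: "cinner (A (T x)) (T x) = m 1 0"
    proof -
      have "cinner (A (T x)) (T x) = cinner (T x) (A (T x))" by (rule pos_selfadj[OF pA])
      also have "\<dots> = cinner x (A (xs 1))" by (simp add: adj Axs[of 0, simplified xs0])
      also have "\<dots> = m 0 1" by (simp add: m_def xs0 pos_selfadj[OF pA])
      also have "\<dots> = m 1 0" using shift[of 0 1] by simp
      finally show ?thesis .
    qed
    define qT where "qT = Re (cinner (A (T x)) (T x))"
    have qT0: "qT \<ge> 0" using pA by (simp add: qT_def positive_op_def)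
    have "qT \<le> cmod (m 1 0)" by (simp add: qT_def eq complex_Re_le_cmod)
    then have "qT^2 \<le> (cmod (m 1 0))^2" using qT0 by (intro power_mono) auto
    also have "\<dots> \<le> Q 1 * Q 0" unfolding m_def Q_def by (rule pos_cs[OF pA])
    also have "\<dots> \<le> (L^2 * Q 0) * Q 0" by (rule mult_right_mono[OF Q1 Q0])
    also have "\<dots> = (L * Q 0)^2" by (simp add: power_mult_distrib power2_eq_square)
    finally have sq: "qT^2 \<le> (L * Q 0)^2" .
    have "0 \<le> L * Q 0" using L0 Q0[of 0] by simp
    with sq have "qT \<le> L * Q 0" by (rule power2_le_imp_le)
    have "(cmod (cinner (A (T x)) x))^2 \<le> qT * Re (cinner (A x) x)"
      unfolding qT_def by (rule pos_cs[OF pA])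
    also have "Re (cinner (A x) x) = Q 0" by (simp add: Q_def m_def xs0)
    also have "qT * Q 0 \<le> (L * Q 0) * Q 0" by (rule mult_right_mono[OF \<open>qT \<le> L * Q 0\<close> Q0])
    also have "\<dots> = (sqrt L * Q 0)^2" using L0 by (simp add: power2_eq_square power_mult_distrib)
    finally have sq2: "(cmod (cinner (A (T x)) x))^2 \<le> (sqrt L * Q 0)^2" .
    have "0 \<le> sqrt L * Q 0" using L0 Q0[of 0] by simp
    with sq2 have "cmod (cinner (A (T x)) x) \<le> sqrt L * Q 0" by (rule power2_le_imp_le)
    then show ?thesis by (simp add: Q_def m_def xs0)
  qed
  then show ?thesis by blast
qed

lemma BA_bound:
  fixes A T :: "'a::chilbert_space \<Rightarrow> 'a"
  assumes pA: "positive_op A" and T: "T \<in> BA A"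
  shows "\<exists>M. \<forall>x. cmod (cinner (A (T x)) x) \<le> M * Re (cinner (A x) x)"
proof -
  have cT: "bounded_clinear_op T" and rg: "range (cadjoint T \<circ> A) \<subseteq> range A"
    using T by (auto simp: BA_def)
  have adj: "\<And>x y. cinner (T x) y = cinner x (cadjoint T y)" using adjoint_exists[OF cT] by blast
  have rng: "\<exists>w. cadjoint T (A y) = A w" for y
  proof -
    have "(cadjoint T \<circ> A) y \<in> range A" using rg by blast
    then show ?thesis by auto
  qed
  show ?thesis by (rule krein[OF pA cT adj rng])
qed

lemma sum_bound:
  fixes A Q R :: "'a::complex_inner \<Rightarrow> 'a"
  assumes pA: "positive_op A"
    and "\<forall>x. cmod (cinner (A (Q x)) x) \<le> MQ * Re (cinner (A x) x)"
    and "\<forall>x. cmod (cinner (A (R x)) x) \<le> MR * Re (cinner (A x) x)"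
  shows "\<exists>M. \<forall>x. cmod (cinner (A (Q x + R x)) x) \<le> M * Re (cinner (A x) x)"
    "\<exists>M. \<forall>x. cmod (cinner (A (Q x - R x)) x) \<le> M * Re (cinner (A x) x)"
proof -
  have cA: "bounded_clinear_op A" using pA by (simp add: positive_op_def)
  have "cmod (cinner (A (Q x + R x)) x) \<le> (MQ + MR) * Re (cinner (A x) x)" for x
  proof -
    have "cmod (cinner (A (Q x + R x)) x) \<le> cmod (cinner (A (Q x)) x) + cmod (cinner (A (R x)) x)"
      by (simp add: clin_facts[OF cA] cinner_add_left norm_triangle_ineq)
    then show ?thesis using assms(2,3) by (simp add: algebra_simps) (smt (verit))
  qed
  then show "\<exists>M. \<forall>x. cmod (cinner (A (Q x + R x)) x) \<le> M * Re (cinner (A x) x)" by blast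
  have "cmod (cinner (A (Q x - R x)) x) \<le> (MQ + MR) * Re (cinner (A x) x)" for x
  proof -
    have "cmod (cinner (A (Q x - R x)) x) \<le> cmod (cinner (A (Q x)) x) + cmod (cinner (A (R x)) x)"
      by (simp add: clin_facts[OF cA] cinner_diff_left norm_triangle_ineq4)
    then show ?thesis using assms(2,3) by (simp add: algebra_simps) (smt (verit))
  qed
  then show "\<exists>M. \<forall>x. cmod (cinner (A (Q x - R x)) x) \<le> M * Re (cinner (A x) x)" by blast
qed

lemma scaled_q:
  fixes A :: "'a::complex_inner \<Rightarrow> 'a"
  assumes pA: "positive_op A"
  shows "cinner (A (scaleR r x)) (scaleR r x) = of_real (r * r) * cinner (A x) x"
proof -
  have cA: "bounded_clinear_op A" using pA by (simp add: positive_op_def)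
  show ?thesis by (simp add: clin_facts[OF cA] cinner_scaleR_left cinner_scaleR_right)
qed

lemma normalize:
  fixes A :: "'a::complex_inner \<Rightarrow> 'a"
  assumes pA: "positive_op A" and q: "Re (cinner (A x) x) > 0"
  shows "A_inner A (scaleR (1 / sqrt (Re (cinner (A x) x))) x) (scaleR (1 / sqrt (Re (cinner (A x) x))) x) = 1"
proof -
  define t where "t = Re (cinner (A x) x)"
  have "A_inner A (scaleR (1 / sqrt t) x) (scaleR (1 / sqrt t) x) = of_real (1 / sqrt t * (1 / sqrt t)) * of_real t"
    unfolding A_inner_def scaled_q[OF pA] t_def using pos_real[OF pA, of x] by simp
  also have "\<dots> = 1" using q unfolding t_def[symmetric]
    by (simp flip: of_real_mult)
  finally show ?thesis unfolding t_def .
qed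

lemma unit_exists:
  fixes A :: "'a::complex_inner \<Rightarrow> 'a"
  assumes pA: "positive_op A" and nz: "A \<noteq> (\<lambda>x. 0)"
  shows "\<exists>u. A_inner A u u = 1"
proof -
  obtain x where x: "A x \<noteq> 0" using nz by blast
  have "Re (cinner (A x) x) > 0"
  proof (rule ccontr)
    assume "\<not> ?thesis"
    then have "Re (cinner (A x) x) = 0" using pA by (simp add: positive_op_def) (smt (verit))
    then have "(cmod (cinner (A x) (A x)))^2 \<le> 0" using pos_cs[OF pA, of x "A x"] by simp
    then have "cinner (A x) (A x) = 0" by simp
    then show False using x cinner_eq_zero_iff by blast
  qed
  then show ?thesis using normalize[OF pA] by blast
qed

lemma omega_le:
  fixes A T :: "'a::complex_inner \<Rightarrow> 'a"
  assumes pA: "positive_op A"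
    and M: "\<forall>x. cmod (cinner (A (T x)) x) \<le> M * Re (cinner (A x) x)"
    and lin: "\<And>r x. T (scaleR r x) = scaleR r (T x)"
  shows "cmod (cinner (A (T x)) x) \<le> omega_A A T * Re (cinner (A x) x)"
    and "A \<noteq> (\<lambda>x. 0) \<Longrightarrow> 0 \<le> omega_A A T"
proof -
  have cA: "bounded_clinear_op A" using pA by (simp add: positive_op_def)
  define SS where "SS = {cmod (A_inner A (T x) x) | x. A_inner A x x = 1}"
  have om: "omega_A A T = Sup SS" by (simp add: omega_A_def omega_ip_def SS_def)
  have bdd: "bdd_above SS"
  proof (rule bdd_aboveI)
    fix y assume "y \<in> SS"
    then obtain z where z: "y = cmod (cinner (A (T z)) z)" "A_inner A z z = 1"
      by (auto simp: SS_def A_inner_def)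
    then have "Re (cinner (A z) z) = 1" by (simp add: A_inner_def)
    then show "y \<le> M" using M z by (metis mult.right_neutral)
  qed
  show "cmod (cinner (A (T x)) x) \<le> omega_A A T * Re (cinner (A x) x)"
  proof (cases "Re (cinner (A x) x) > 0")
    case True
    define t where "t = Re (cinner (A x) x)"
    define z where "z = scaleR (1 / sqrt t) x"
    have "A_inner A z z = 1" unfolding z_def t_def by (rule normalize[OF pA True])
    then have "cmod (A_inner A (T z) z) \<in> SS" by (auto simp: SS_def)
    then have le: "cmod (A_inner A (T z) z) \<le> omega_A A T" unfolding om using bdd by (rule cSup_upper)
    have "A_inner A (T z) z = of_real (1 / sqrt t * (1 / sqrt t)) * cinner (A (T x)) x"
      unfolding z_def A_inner_def
      by (simp only: lin clin_facts(4)[OF cA] cinner_scaleR_left cinner_scaleR_right of_real_mult mult.assoc)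
    also have "1 / sqrt t * (1 / sqrt t) = 1 / t"
    proof -
      have "sqrt t * sqrt t = t" using True unfolding t_def[symmetric] by simp
      moreover have "1 / sqrt t * (1 / sqrt t) = 1 / (sqrt t * sqrt t)" by simp
      ultimately show ?thesis by simp
    qed
    finally have "cmod (A_inner A (T z) z) = cmod (cinner (A (T x)) x) / t"
      using True unfolding t_def[symmetric] by (simp add: norm_divide)
    with le have "cmod (cinner (A (T x)) x) / t \<le> omega_A A T" by simp
    then show ?thesis using True unfolding t_def[symmetric] by (simp add: field_simps)
  next
    case False
    then have q0: "Re (cinner (A x) x) = 0" using pA by (simp add: positive_op_def) (smt (verit))
    have "(cmod (cinner (A (T x)) x))^2 \<le> Re (cinner (A (T x)) (T x)) * Re (cinner (A x) x)"
      by (rule pos_cs[OF pA])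
    then have "cmod (cinner (A (T x)) x) = 0" using q0 by simp
    then show ?thesis using q0 by simp
  qed
  assume "A \<noteq> (\<lambda>x. 0)"
  then obtain u where u: "A_inner A u u = 1" using unit_exists[OF pA] by blast
  then have "cmod (A_inner A (T u) u) \<in> SS" by (auto simp: SS_def)
  then have "cmod (A_inner A (T u) u) \<le> omega_A A T" unfolding om using bdd by (rule cSup_upper)
  then show "0 \<le> omega_A A T" by (meson norm_ge_zero order.trans)
qed

lemma F_bound:
  fixes A X :: "'a::complex_inner \<Rightarrow> 'a"
  assumes pA: "positive_op A"
    and ladd: "\<And>a b. X (a + b) = X a + X b" and ldiff: "\<And>a b. X (a - b) = X a - X b"
    and bnd: "\<And>z. cmod (cinner (A (X z)) z) \<le> w * Re (cinner (A z) z)"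
  shows "cmod (cinner (A (X y)) x + cinner (A (X x)) y) \<le> w * (Re (cinner (A x) x) + Re (cinner (A y) y))"
proof -
  have cA: "bounded_clinear_op A" using pA by (simp add: positive_op_def)
  define E where "E = cinner (A (X y)) x + cinner (A (X x)) y"
  have id: "cinner (A (X (x + y))) (x + y) - cinner (A (X (x - y))) (x - y) = 2 * E"
    unfolding E_def
    by (simp add: ladd ldiff clin_facts[OF cA] cinner_add_left cinner_add_right cinner_diff_left cinner_diff_right algebra_simps)
  have par: "Re (cinner (A (x + y)) (x + y)) + Re (cinner (A (x - y)) (x - y)) = 2 * Re (cinner (A x) x) + 2 * Re (cinner (A y) y)"
  proof -
    have "cinner (A (x + y)) (x + y) + cinner (A (x - y)) (x - y) = 2 * cinner (A x) x + 2 * cinner (A y) y"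
      by (simp add: clin_facts[OF cA] cinner_add_left cinner_add_right cinner_diff_left cinner_diff_right algebra_simps)
    then have "Re (cinner (A (x + y)) (x + y) + cinner (A (x - y)) (x - y)) = Re (2 * cinner (A x) x + 2 * cinner (A y) y)"
      by simp
    then show ?thesis by simp
  qed
  have "2 * cmod E = cmod (cinner (A (X (x + y))) (x + y) - cinner (A (X (x - y))) (x - y))"
    by (simp add: id norm_mult)
  also have "\<dots> \<le> cmod (cinner (A (X (x + y))) (x + y)) + cmod (cinner (A (X (x - y))) (x - y))"
    by (rule norm_triangle_ineq4)
  also have "\<dots> \<le> w * Re (cinner (A (x + y)) (x + y)) + w * Re (cinner (A (x - y)) (x - y))"
    by (intro add_mono bnd)
  also have "\<dots> = 2 * (w * (Re (cinner (A x) x) + Re (cinner (A y) y)))"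
    using par by (simp add: algebra_simps) (metis distrib_left mult.commute mult_2)
  finally show ?thesis unfolding E_def by simp
qed

lemma G_bound:
  fixes A X :: "'a::complex_inner \<Rightarrow> 'a"
  assumes pA: "positive_op A"
    and ladd: "\<And>a b. X (a + b) = X a + X b" and ldiff: "\<And>a b. X (a - b) = X a - X b"
    and lc: "\<And>c a. X (cscale c a) = cscale c (X a)"
    and bnd: "\<And>z. cmod (cinner (A (X z)) z) \<le> w * Re (cinner (A z) z)"
  shows "cmod (cinner (A (X y)) x - cinner (A (X x)) y) \<le> w * (Re (cinner (A x) x) + Re (cinner (A y) y))"
proof -
  have cA: "bounded_clinear_op A" using pA by (simp add: positive_op_def)
  have 1: "cinner (A (X (cscale \<i> y))) x + cinner (A (X x)) (cscale \<i> y) = \<i> * (cinner (A (X y)) x - cinner (A (X x)) y)"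
    by (simp add: lc clin_facts[OF cA] cinner_cscale_left cinner_cscale_right algebra_simps)
  have 2: "cinner (A (cscale \<i> y)) (cscale \<i> y) = cinner (A y) y"
    by (simp add: clin_facts[OF cA] cinner_cscale_left cinner_cscale_right)
  have "cmod (cinner (A (X (cscale \<i> y))) x + cinner (A (X x)) (cscale \<i> y)) \<le> w * (Re (cinner (A x) x) + Re (cinner (A (cscale \<i> y)) (cscale \<i> y)))"
    by (rule F_bound[OF pA ladd ldiff bnd])
  then show ?thesis unfolding 1 2 by (simp add: norm_mult)
qed

lemma am_gm_inf:
  fixes a b e :: real
  assumes a: "a \<ge> 0" and b: "b \<ge> 0" and h: "\<And>s. s > 0 \<Longrightarrow> e \<le> s * a + b / s"
  shows "e \<le> 2 * sqrt (a * b)"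
proof (cases "a > 0 \<and> b > 0")
  case True
  define s where "s = sqrt b / sqrt a"
  have s: "s > 0" using True by (simp add: s_def)
  have sa: "sqrt a * sqrt a = a" and sb: "sqrt b * sqrt b = b" using True by simp_all
  have "s * a = sqrt a * sqrt b"
    using True unfolding s_def by (metis sa times_divide_eq_left nonzero_mult_div_cancel_left real_sqrt_gt_0_iff less_irrefl mult.commute)
  moreover have "b / s = sqrt a * sqrt b"
    using True unfolding s_def by (metis sb divide_divide_eq_right nonzero_mult_div_cancel_right real_sqrt_gt_0_iff less_irrefl mult.commute)
  ultimately show ?thesis using h[OF s] by (simp add: real_sqrt_mult)
next
  case False
  show ?thesis
  proof (rule ccontr)
    assume "\<not> ?thesis"
    then have e: "e > 0" using a b by (smt (verit) real_sqrt_ge_zero mult_nonneg_nonneg)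
    show False
    proof (cases "a = 0")
      case True
      define s where "s = (b + 1) / e"
      have s: "s > 0" using e b by (simp add: s_def)
      have "b / s = b * e / (b + 1)" using e b by (simp add: s_def)
      also have "\<dots> < e" using e b by (simp add: field_simps)
      finally show False using h[OF s] True by simp
    next
      case False
      then have b0: "b = 0" using \<open>\<not> (a > 0 \<and> b > 0)\<close> a b by simp
      define s where "s = e / (a + 1)"
      have s: "s > 0" using e a by (simp add: s_def)
      have "s * a = e * a / (a + 1)" by (simp add: s_def)
      also have "\<dots> < e" using e a by (simp add: field_simps)
      finally show False using h[OF s] b0 by simp
    qed
  qed
qed

lemma eig_bound:
  fixes p s c q1 q2 :: real
  assumes c: "c \<ge> 0" and q1: "q1 \<ge> 0" and q2: "q2 \<ge> 0" and q: "q1 + q2 = 1"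
  shows "p * q1 + s * q2 + c * sqrt (q1 * q2) \<le> (p + s + sqrt ((p - s)^2 + c^2)) / 2"
proof -
  define D where "D = sqrt ((p - s)^2 + c^2)"
  have D0: "D \<ge> 0" by (simp add: D_def)
  have D2: "D^2 = (p - s)^2 + c^2" unfolding D_def by (simp add: add_nonneg_nonneg)
  have "sqrt ((p - s)^2) \<le> D" unfolding D_def by (rule real_sqrt_le_mono) simp
  then have Dps: "\<bar>p - s\<bar> \<le> D" by simp
  define \<alpha> where "\<alpha> = (s - p + D) / 2"
  define \<beta> where "\<beta> = (p - s + D) / 2"
  have a0: "\<alpha> \<ge> 0" using Dps by (simp add: \<alpha>_def)
  have b0: "\<beta> \<ge> 0" using Dps by (simp add: \<beta>_def)
  have ab: "\<alpha> * \<beta> = (c / 2)^2"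
    unfolding \<alpha>_def \<beta>_def using D2 by (simp add: power2_eq_square algebra_simps)
  have sab: "sqrt \<alpha> * sqrt \<beta> = c / 2"
    using ab c by (simp add: real_sqrt_mult[symmetric])
  define u where "u = sqrt q1"
  define v where "v = sqrt q2"
  have u2: "u^2 = q1" and v2: "v^2 = q2" using q1 q2 by (simp_all add: u_def v_def)
  have uv: "sqrt (q1 * q2) = u * v" by (simp add: u_def v_def real_sqrt_mult)
  have "0 \<le> (sqrt \<alpha> * u - sqrt \<beta> * v)^2" by simp
  also have "\<dots> = \<alpha> * u^2 - 2 * (sqrt \<alpha> * sqrt \<beta>) * (u * v) + \<beta> * v^2"
    using a0 b0 by (simp add: power2_eq_square algebra_simps)
  also have "\<dots> = \<alpha> * q1 - c * sqrt (q1 * q2) + \<beta> * q2" by (simp add: u2 v2 sab uv)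
  finally have "c * sqrt (q1 * q2) \<le> \<alpha> * q1 + \<beta> * q2" by simp
  moreover have "\<alpha> * q1 + \<beta> * q2 = (p + s + D) / 2 * (q1 + q2) - p * q1 - s * q2"
    unfolding \<alpha>_def \<beta>_def by (simp add: field_simps)
  also have "\<dots> = (p + s + D) / 2 - p * q1 - s * q2" using q by simp
  ultimately show ?thesis unfolding D_def by linarith
qed

lemma final_bound:
  fixes p s c :: real
  assumes c: "c \<ge> 0"
  shows "(p + s + sqrt ((p - s)^2 + c^2)) / 2 \<le> max p s + c / 2"
proof -
  have "sqrt ((p - s)^2 + c^2) \<le> sqrt ((\<bar>p - s\<bar> + c)^2)"
    using c by (intro real_sqrt_le_mono) (simp add: power2_eq_square algebra_simps)
  also have "\<dots> = \<bar>p - s\<bar> + c" using c by simp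
  finally show ?thesis using c by (simp add: max_def abs_if split: if_splits)
qed

theorem theorem2p9:
  fixes A P Q R S :: "'a::chilbert_space \<Rightarrow> 'a"
  assumes "positive_op A" and "A \<noteq> (\<lambda>x. 0)"
    and "P \<in> BA A" and "Q \<in> BA A" and "R \<in> BA A" and "S \<in> BA A"
  shows "omega_AA A (block_op P Q R S)
           \<le> (omega_A A P + omega_A A S
               + sqrt ((omega_A A P - omega_A A S)\<^sup>2
                       + (omega_A A (\<lambda>x. Q x + R x) + omega_A A (\<lambda>x. Q x - R x))\<^sup>2)) / 2
       \<and> (omega_A A P + omega_A A S
               + sqrt ((omega_A A P - omega_A A S)\<^sup>2
                       + (omega_A A (\<lambda>x. Q x + R x) + omega_A A (\<lambda>x. Q x - R x))\<^sup>2)) / 2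
           \<le> max (omega_A A P) (omega_A A S)
             + (omega_A A (\<lambda>x. Q x + R x) + omega_A A (\<lambda>x. Q x - R x)) / 2"
proof -
  note pA = assms(1) and nz = assms(2)
  have cA: "bounded_clinear_op A" using pA by (simp add: positive_op_def)
  have cP: "bounded_clinear_op P" and cQ: "bounded_clinear_op Q" and cR: "bounded_clinear_op R"
    and cS: "bounded_clinear_op S" using assms(3-6) by (auto simp: BA_def)
  obtain MP where MP: "\<forall>x. cmod (cinner (A (P x)) x) \<le> MP * Re (cinner (A x) x)" using BA_bound[OF pA assms(3)] by blast
  obtain MQ where MQ: "\<forall>x. cmod (cinner (A (Q x)) x) \<le> MQ * Re (cinner (A x) x)" using BA_bound[OF pA assms(4)] by blast
  obtain MR where MR: "\<forall>x. cmod (cinner (A (R x)) x) \<le> MR * Re (cinner (A x) x)" using BA_bound[OF pA assms(5)] by blast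
  obtain MS where MS: "\<forall>x. cmod (cinner (A (S x)) x) \<le> MS * Re (cinner (A x) x)" using BA_bound[OF pA assms(6)] by blast
  define X where "X = (\<lambda>x. Q x + R x)"
  define Y where "Y = (\<lambda>x. Q x - R x)"
  obtain MX where MX: "\<forall>x. cmod (cinner (A (X x)) x) \<le> MX * Re (cinner (A x) x)"
    using sum_bound(1)[OF pA MQ MR] unfolding X_def by blast
  obtain MY where MY: "\<forall>x. cmod (cinner (A (Y x)) x) \<le> MY * Re (cinner (A x) x)"
    using sum_bound(2)[OF pA MQ MR] unfolding Y_def by blast
  have Xl: "X (a + b) = X a + X b" "X (a - b) = X a - X b" "X (cscale c a) = cscale c (X a)"
    "X (scaleR r a) = scaleR r (X a)" for a b c r
    unfolding X_def by (simp_all add: clin_facts[OF cQ] clin_facts[OF cR] cscale_add_right scaleR_add_right)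
  have Yl: "Y (a + b) = Y a + Y b" "Y (a - b) = Y a - Y b" "Y (cscale c a) = cscale c (Y a)"
    "Y (scaleR r a) = scaleR r (Y a)" for a b c r
    unfolding Y_def by (simp_all add: clin_facts[OF cQ] clin_facts[OF cR] cscale_diff_right scaleR_diff_right)
  define p where "p = omega_A A P"
  define s where "s = omega_A A S"
  define wX where "wX = omega_A A X"
  define wY where "wY = omega_A A Y"
  define c where "c = wX + wY"
  have bP: "cmod (cinner (A (P x)) x) \<le> p * Re (cinner (A x) x)" for x
    unfolding p_def by (rule omega_le(1)[OF pA MP]) (simp add: clin_facts[OF cP])
  have bS: "cmod (cinner (A (S x)) x) \<le> s * Re (cinner (A x) x)" for x
    unfolding s_def by (rule omega_le(1)[OF pA MS]) (simp add: clin_facts[OF cS])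
  have bX: "cmod (cinner (A (X x)) x) \<le> wX * Re (cinner (A x) x)" for x
    unfolding wX_def by (rule omega_le(1)[OF pA MX]) (simp add: Xl)
  have bY: "cmod (cinner (A (Y x)) x) \<le> wY * Re (cinner (A x) x)" for x
    unfolding wY_def by (rule omega_le(1)[OF pA MY]) (simp add: Yl)
  have wX0: "wX \<ge> 0" unfolding wX_def by (rule omega_le(2)[OF pA MX _ nz]) (simp add: Xl)
  have wY0: "wY \<ge> 0" unfolding wY_def by (rule omega_le(2)[OF pA MY _ nz]) (simp add: Yl)
  have c0: "c \<ge> 0" using wX0 wY0 by (simp add: c_def)
  define E where "E x y = cinner (A (Q y)) x + cinner (A (R x)) y" for x y
  have Eb: "cmod (E x y) \<le> c / 2 * (Re (cinner (A x) x) + Re (cinner (A y) y))" for x y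
  proof -
    have id: "2 * E x y = (cinner (A (X y)) x + cinner (A (X x)) y) + (cinner (A (Y y)) x - cinner (A (Y x)) y)"
      unfolding E_def X_def Y_def
      by (simp add: clin_facts[OF cA] cinner_add_left cinner_diff_left algebra_simps)
    have "2 * cmod (E x y) = cmod (2 * E x y)" by (simp add: norm_mult)
    also have "\<dots> \<le> cmod (cinner (A (X y)) x + cinner (A (X x)) y) + cmod (cinner (A (Y y)) x - cinner (A (Y x)) y)"
      unfolding id by (rule norm_triangle_ineq)
    also have "\<dots> \<le> wX * (Re (cinner (A x) x) + Re (cinner (A y) y)) + wY * (Re (cinner (A x) x) + Re (cinner (A y) y))"
      by (intro add_mono F_bound[OF pA Xl(1) Xl(2) bX] G_bound[OF pA Yl(1) Yl(2) Yl(3) bY])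
    finally have h: "2 * cmod (E x y) \<le> wX * (Re (cinner (A x) x) + Re (cinner (A y) y)) + wY * (Re (cinner (A x) x) + Re (cinner (A y) y))" .
    have e1: "c * (Re (cinner (A x) x) + Re (cinner (A y) y)) = wX * (Re (cinner (A x) x) + Re (cinner (A y) y)) + wY * (Re (cinner (A x) x) + Re (cinner (A y) y))"
      unfolding c_def by (rule distrib_right)
    have e2: "c / 2 * (Re (cinner (A x) x) + Re (cinner (A y) y)) = c * (Re (cinner (A x) x) + Re (cinner (A y) y)) / 2"
      by simp
    show ?thesis using h e1 e2 by linarith
  qed
  have Es: "cmod (E x y) \<le> c * sqrt (Re (cinner (A x) x) * Re (cinner (A y) y))" for x y
  proof -
    define qx where "qx = Re (cinner (A x) x)"
    define qy where "qy = Re (cinner (A y) y)"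
    have qx0: "qx \<ge> 0" and qy0: "qy \<ge> 0" using pA by (auto simp: qx_def qy_def positive_op_def)
    have "cmod (E x y) \<le> 2 * sqrt ((c/2 * qx) * (c/2 * qy))"
    proof (rule am_gm_inf)
      show "c/2 * qx \<ge> 0" "c/2 * qy \<ge> 0" using c0 qx0 qy0 by simp_all
      fix \<sigma> :: real assume \<sigma>: "\<sigma> > 0"
      define t where "t = sqrt \<sigma>"
      have t: "t > 0" "t * t = \<sigma>" using \<sigma> by (simp_all add: t_def)
      have "E (scaleR t x) (scaleR (1/t) y) = E x y"
      proof -
        have k: "complex_of_real (1/t) * (complex_of_real t * z) = z" for z
          using t by (simp flip: of_real_mult mult.assoc)
        have k2: "complex_of_real t * (complex_of_real (1/t) * z) = z" for z
          using t by (simp flip: of_real_mult mult.assoc)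
        show ?thesis unfolding E_def
          by (simp only: clin_facts(4)[OF cA] clin_facts(4)[OF cQ] clin_facts(4)[OF cR]
              cinner_scaleR_left cinner_scaleR_right k k2)
      qed
      moreover have "Re (cinner (A (scaleR t x)) (scaleR t x)) = \<sigma> * qx"
        unfolding scaled_q[OF pA] qx_def using t by simp
      moreover have "Re (cinner (A (scaleR (1/t) y)) (scaleR (1/t) y)) = qy / \<sigma>"
        unfolding scaled_q[OF pA] qy_def using t by (simp flip: t(2))
      ultimately have "cmod (E x y) \<le> c / 2 * (\<sigma> * qx + qy / \<sigma>)"
        using Eb[of "scaleR t x" "scaleR (1/t) y"] by simp
      then show "cmod (E x y) \<le> \<sigma> * (c/2 * qx) + c/2 * qy / \<sigma>" by (simp add: algebra_simps)
    qed
    also have "sqrt ((c/2 * qx) * (c/2 * qy)) = c/2 * sqrt (qx * qy)"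
    proof -
      have "(c/2 * qx) * (c/2 * qy) = (c/2)^2 * (qx * qy)" by (simp add: power2_eq_square)
      then have "sqrt ((c/2 * qx) * (c/2 * qy)) = sqrt ((c/2)^2) * sqrt (qx * qy)" by (simp only: real_sqrt_mult)
      also have "sqrt ((c/2)^2) = c/2" using c0 by simp
      finally show ?thesis .
    qed
    finally show ?thesis by (simp add: qx_def qy_def)
  qed
  have part1: "omega_AA A (block_op P Q R S) \<le> (p + s + sqrt ((p - s)^2 + c^2)) / 2"
    unfolding omega_AA_def omega_ip_def
  proof (rule cSup_least)
    obtain u where u: "A_inner A u u = 1" using unit_exists[OF pA nz] by blast
    have "AA_inner A (u, 0) (u, 0) = 1" using u by (simp add: AA_inner_def A_inner_def clin_facts[OF cA])
    then show "{cmod (AA_inner A (block_op P Q R S z) z) |z. AA_inner A z z = 1} \<noteq> {}" by blast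
    fix v assume "v \<in> {cmod (AA_inner A (block_op P Q R S z) z) |z. AA_inner A z z = 1}"
    then obtain x1 x2 where v: "v = cmod (AA_inner A (block_op P Q R S (x1, x2)) (x1, x2))"
      and n: "AA_inner A (x1, x2) (x1, x2) = 1" by auto
    define q1 where "q1 = Re (cinner (A x1) x1)"
    define q2 where "q2 = Re (cinner (A x2) x2)"
    have q10: "q1 \<ge> 0" and q20: "q2 \<ge> 0" using pA by (auto simp: q1_def q2_def positive_op_def)
    have "Re (AA_inner A (x1, x2) (x1, x2)) = 1" using n by simp
    then have q12: "q1 + q2 = 1" by (simp add: AA_inner_def A_inner_def q1_def q2_def)
    have blk: "AA_inner A (block_op P Q R S (x1, x2)) (x1, x2) = cinner (A (P x1)) x1 + cinner (A (S x2)) x2 + E x1 x2"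
      by (simp add: AA_inner_def A_inner_def block_op_def E_def clin_facts[OF cA] cinner_add_left algebra_simps)
    have "cmod (cinner (A (P x1)) x1 + cinner (A (S x2)) x2 + E x1 x2) \<le> cmod (cinner (A (P x1)) x1) + cmod (cinner (A (S x2)) x2) + cmod (E x1 x2)"
      by (rule order_trans[OF norm_triangle_ineq]) (simp add: norm_triangle_ineq)
    then have "v \<le> cmod (cinner (A (P x1)) x1) + cmod (cinner (A (S x2)) x2) + cmod (E x1 x2)"
      unfolding v blk .
    also have "\<dots> \<le> p * q1 + s * q2 + c * sqrt (q1 * q2)"
      unfolding q1_def q2_def by (intro add_mono bP bS Es)
    also have "\<dots> \<le> (p + s + sqrt ((p - s)^2 + c^2)) / 2"
      by (rule eig_bound[OF c0 q10 q20 q12])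
    finally show "v \<le> (p + s + sqrt ((p - s)^2 + c^2)) / 2" .
  qed
  have part2: "(p + s + sqrt ((p - s)^2 + c^2)) / 2 \<le> max p s + c / 2"
    by (rule final_bound[OF c0])
  show ?thesis using part1 part2 unfolding p_def s_def c_def wX_def wY_def X_def Y_def by simp
qed

end
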